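(* Let $b_x,b_y,u_x,u_y,K,\beta,e$ be positive constants with $u_y>u_x$ and $b_x\geq b_y+e$, let $h>0$, and set \[ \phi_1(h)=\frac{b_y\left\{1-\exp\left(-\frac{\beta K u_y}{b_y}h\right)\right\}}{\beta K u_y},\qquad \phi_2(h)=h . \] Consider the discrete system \[ X_{n+1}=\frac{X_n(1+\phi_1(h)b_x)+\phi_1(h)eY_n}{1+\phi_1(h)\left(\frac{b_x}{K}X_n+\frac{b_x}{K}Y_n+u_x+\beta Y_n+\frac{e}{K}Y_n+\frac{e}{K}\frac{Y_n^2}{X_n}\right)},\qquad Y_{n+1}=\frac{Y_n\{1+\phi_2(h)(b_y+\beta X_n)\}}{1+\phi_2(h)\left(\frac{b_y}{K}X_n+\frac{b_y}{K}Y_n+u_y\right)} . \] Let $E_0=(0,0)$, $E_1=(\bar X,0)$ with $\bar X=K(1-u_x/b_x)$, and $E^*=(X^*,Y^* )$ with \[ X^*=\frac{-B+\sqrt{B^2-4AC}}{2A},\qquad Y^*=\frac{(\beta K-b_y)X^*}{b_y}+\frac{K(b_y-u_y)}{b_y}, \] where \[ A=\frac{\beta K}{b_y^2}\{b_y(b_x-b_y-e)+\beta K(b_y+e)\}, \] \[ B=-K(b_x-u_x)+K(b_x+\beta K+e)\frac{b_y-u_y}{b_y}+2eK\frac{(\beta K-b_y)(b_y-u_y)}{b_y^2}-\frac{eK(\beta K-b_y)}{b_y}, \] \[ C=-\frac{eK^2(b_y-u_y)u_y}{b_y^2}. \] Define $V_0=\frac{b_y}{b_x}\frac{u_x}{u_y}$,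 $H_0=\frac{\beta}{u_y}K\left(1-\frac{u_x}{b_x}\right)$ and $R_0=V_0+H_0$. Then, for every $h>0$: (i) the system is locally asymptotically stable around $E_0$ if $b_x<u_x$ and $b_y<u_y$; (ii) if $b_x>u_x$, the system is locally asymptotically stable around $E_1$ when $R_0<1$, and $E_1$ is unstable when $R_0>1$; (iii) the system is locally asymptotically stable around $E^*$ if $b_x>u_x$, $b_y>u_y$, $b_y>\beta K$ and $\frac{K}{X^*}>\frac{b_y-\beta K}{b_y-u_y}$.
   Context: This is a nonstandard finite-difference discretization (with step size $h$) of a host–parasite model with horizontal and imperfect vertical transmission. The paper assumes throughout that $u_y>u_x$ and $b_x\geq b_y+e$. A fixed point of the map is called (locally asymptotically) stable if both eigenvalues of the Jacobian of the map at the fixed point have modulus strictly less than $1$. *)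

theory Defs
  imports "HOL-Analysis.Analysis"
begin

definition phi1 :: "real \<Rightarrow> real \<Rightarrow> real \<Rightarrow> real \<Rightarrow> real \<Rightarrow> real" where
  "phi1 by' uy \<beta> K h = by' * (1 - exp (-(\<beta> * K * uy / by') * h)) / (\<beta> * K * uy)"

definition phi2 :: "real \<Rightarrow> real" where
  "phi2 h = h"

definition Fmap :: "real \<Rightarrow> real \<Rightarrow> real \<Rightarrow> real \<Rightarrow> real \<Rightarrow> real \<Rightarrow> real \<Rightarrow> real \<Rightarrow> real \<Rightarrow> real \<Rightarrow> real" where
  "Fmap bx by' ux uy K \<beta> e h X Y =
     (let p = phi1 by' uy \<beta> K h in
      (X * (1 + p * bx) + p * e * Y) /
      (1 + p * (bx / K * X + bx / K * Y + ux + \<beta> * Y + e / K * Y + e / K * (Y^2 / X))))"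

definition Gmap :: "real \<Rightarrow> real \<Rightarrow> real \<Rightarrow> real \<Rightarrow> real \<Rightarrow> real \<Rightarrow> real \<Rightarrow> real \<Rightarrow> real \<Rightarrow> real \<Rightarrow> real" where
  "Gmap bx by' ux uy K \<beta> e h X Y =
     (let q = phi2 h in
      Y * (1 + q * (by' + \<beta> * X)) / (1 + q * (by' / K * X + by' / K * Y + uy)))"

definition is_jacobian :: "(real \<Rightarrow> real \<Rightarrow> real) \<Rightarrow> (real \<Rightarrow> real \<Rightarrow> real) \<Rightarrow> real \<Rightarrow> real \<Rightarrow>
    real \<Rightarrow> real \<Rightarrow> real \<Rightarrow> real \<Rightarrow> bool" where
  "is_jacobian f g X Y a b c d \<longleftrightarrow>
     ((\<lambda>x. f x Y) has_real_derivative a) (at X) \<and>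
     ((\<lambda>y. f X y) has_real_derivative b) (at Y) \<and>
     ((\<lambda>x. g x Y) has_real_derivative c) (at X) \<and>
     ((\<lambda>y. g X y) has_real_derivative d) (at Y)"

definition eigen2 :: "real \<Rightarrow> real \<Rightarrow> real \<Rightarrow> real \<Rightarrow> complex \<Rightarrow> bool" where
  "eigen2 a b c d z \<longleftrightarrow> (z - of_real a) * (z - of_real d) - of_real b * of_real c = 0"

definition fixed_point2 :: "(real \<Rightarrow> real \<Rightarrow> real) \<Rightarrow> (real \<Rightarrow> real \<Rightarrow> real) \<Rightarrow> real \<Rightarrow> real \<Rightarrow> bool" where
  "fixed_point2 f g X Y \<longleftrightarrow> f X Y = X \<and> g X Y = Y"

definition las2 :: "(real \<Rightarrow> real \<Rightarrow> real) \<Rightarrow> (real \<Rightarrow> real \<Rightarrow> real) \<Rightarrow> real \<Rightarrow> real \<Rightarrow> bool" where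
  "las2 f g X Y \<longleftrightarrow> fixed_point2 f g X Y \<and>
     (\<exists>a b c d. is_jacobian f g X Y a b c d \<and> (\<forall>z. eigen2 a b c d z \<longrightarrow> cmod z < 1))"

definition unstable2 :: "(real \<Rightarrow> real \<Rightarrow> real) \<Rightarrow> (real \<Rightarrow> real \<Rightarrow> real) \<Rightarrow> real \<Rightarrow> real \<Rightarrow> bool" where
  "unstable2 f g X Y \<longleftrightarrow> fixed_point2 f g X Y \<and>
     (\<exists>a b c d. is_jacobian f g X Y a b c d \<and> (\<exists>z. eigen2 a b c d z \<and> cmod z > 1))"


definition qA :: "real \<Rightarrow> real \<Rightarrow> real \<Rightarrow> real \<Rightarrow> real \<Rightarrow> real \<Rightarrow> real \<Rightarrow> real" where
  "qA bx by' ux uy K \<beta> e = \<beta> * K / by'^2 * (by' * (bx - by' - e) + \<beta> * K * (by' + e))"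

definition qB :: "real \<Rightarrow> real \<Rightarrow> real \<Rightarrow> real \<Rightarrow> real \<Rightarrow> real \<Rightarrow> real \<Rightarrow> real" where
  "qB bx by' ux uy K \<beta> e = - K * (bx - ux) + K * (bx + \<beta> * K + e) * ((by' - uy) / by')
      + 2 * e * K * ((\<beta> * K - by') * (by' - uy)) / by'^2 - e * K * (\<beta> * K - by') / by'"

definition qC :: "real \<Rightarrow> real \<Rightarrow> real \<Rightarrow> real \<Rightarrow> real \<Rightarrow> real \<Rightarrow> real \<Rightarrow> real" where
  "qC bx by' ux uy K \<beta> e = - (e * K^2 * (by' - uy) * uy) / by'^2"

definition Xstar :: "real \<Rightarrow> real \<Rightarrow> real \<Rightarrow> real \<Rightarrow> real \<Rightarrow> real \<Rightarrow> real \<Rightarrow> real" where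
  "Xstar bx by' ux uy K \<beta> e =
     (let A = qA bx by' ux uy K \<beta> e; B = qB bx by' ux uy K \<beta> e; C = qC bx by' ux uy K \<beta> e
      in (- B + sqrt (B^2 - 4 * A * C)) / (2 * A))"

definition Ystar :: "real \<Rightarrow> real \<Rightarrow> real \<Rightarrow> real \<Rightarrow> real \<Rightarrow> real \<Rightarrow> real \<Rightarrow> real" where
  "Ystar bx by' ux uy K \<beta> e =
     (\<beta> * K - by') * Xstar bx by' ux uy K \<beta> e / by' + K * (by' - uy) / by'"

end

theory Submission imports Defs begin

lemma jury:
  fixes a b c d :: real
  assumes h1: "\<bar>a + d\<bar> < 1 + (a*d - b*c)" and h2: "a*d - b*c < 1"
  shows "\<forall>z. eigen2 a b c d z \<longrightarrow> cmod z < 1"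
proof (intro allI impI)
  fix z assume ez: "eigen2 a b c d z"
  define T where "T = a + d"
  define D where "D = a*d - b*c"
  obtain u v where z: "z = Complex u v" by (cases z) auto
  have eq: "z*z - of_real T * z + of_real D = 0"
    using ez unfolding eigen2_def T_def D_def by (simp add: algebra_simps)
  have re: "u * u - v * v - T*u + D = 0"
    using arg_cong[OF eq, of Re] by (simp add: z)
  have im: "v * (2 * u - T) = 0"
    using arg_cong[OF eq, of Im] by (simp add: z algebra_simps)
  have hT: "\<bar>T\<bar> < 1 + D" and hD: "D < 1" using h1 h2 by (simp_all add: T_def D_def)
  have "u * u + v * v < 1"
  proof (cases "v = 0")
    case True
    then have r: "u * u - T*u + D = 0" using re by simp
    have "\<bar>u\<bar> < 1"
    proof (rule ccontr)
      assume "\<not> \<bar>u\<bar> < 1"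
      then consider "u \<ge> 1" | "u \<le> -1" by linarith
      then show False
      proof cases
        case 1
        have "(u - 1) * (u + 1 - T) \<ge> 0" using 1 hT hD by (intro mult_nonneg_nonneg) auto
        then show False using r hT 1 by (auto simp: algebra_simps)
      next
        case 2
        have "(-u - 1) * (-u + 1 + T) \<ge> 0" using 2 hT hD by (intro mult_nonneg_nonneg) auto
        then show False using r hT 2 by (auto simp: algebra_simps)
      qed
    qed
    then have "\<bar>u\<bar> * \<bar>u\<bar> < 1 * 1" by (intro mult_strict_mono) auto
    then have "u * u < 1" by (simp add: abs_mult_self_eq)
    then show ?thesis using True by simp
  next
    case False
    then have "T = 2*u" using im by simp
    then have "u * u + v * v = D" using re by (simp add: algebra_simps)
    then show ?thesis using hD by simp
  qed
  then show "cmod z < 1" by (simp add: z cmod_def power2_eq_square)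
qed

lemma LL:
  fixes cZ cO dZ dO X :: real
  assumes "dZ + dO*X \<noteq> 0"
  shows "((\<lambda>x. (cZ + cO*x)/(dZ + dO*x)) has_real_derivative
     (cO*(dZ+dO*X) - (cZ+cO*X)*dO)/((dZ+dO*X)*(dZ+dO*X))) (at X)"
proof -
  have n: "((\<lambda>x. cZ + cO*x) has_real_derivative (0 + cO*1)) (at X)"
    by (intro DERIV_add DERIV_cmult DERIV_ident DERIV_const)
  have d: "((\<lambda>x. dZ + dO*x) has_real_derivative (0 + dO*1)) (at X)"
    by (intro DERIV_add DERIV_cmult DERIV_ident DERIV_const)
  show ?thesis using DERIV_divide[OF n d] assms by simp
qed

lemma dq1: assumes X: "X \<noteq> 0"
  shows "((\<lambda>x. 1 + p*(aO*x + aZ + aT*(Y^2/x))) has_real_derivative (p*(aO - aT*(Y^2/X^2)))) (at X)"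
proof -
  have q: "((\<lambda>x. Y^2 * inverse x) has_real_derivative (Y^2 * (- (inverse X ^ Suc (Suc 0))))) (at X)"
    by (intro DERIV_cmult DERIV_inverse X) 
  have q2: "((\<lambda>x. Y^2/x) has_real_derivative (-(Y^2/X^2))) (at X)"
    using q by (simp add: divide_inverse power2_eq_square)
  have r: "((\<lambda>x. aO*x + aZ + aT*(Y^2/x)) has_real_derivative (aO*1 + 0 + aT*(-(Y^2/X^2)))) (at X)"
    by (intro DERIV_add DERIV_cmult DERIV_ident DERIV_const q2)
  have "((\<lambda>x. 1 + p*(aO*x + aZ + aT*(Y^2/x))) has_real_derivative (0 + p*(aO*1 + 0 + aT*(-(Y^2/X^2))))) (at X)"
    by (intro DERIV_add DERIV_cmult DERIV_const r)
  then show ?thesis by (simp add: algebra_simps)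
qed

lemma LFx:
  assumes X: "X \<noteq> 0" and D: "1 + p*(aO*X + aZ + aT*(Y^2/X)) \<noteq> 0"
  shows "((\<lambda>x. (x*cO + cZ)/(1 + p*(aO*x + aZ + aT*(Y^2/x)))) has_real_derivative
     (cO*(1 + p*(aO*X + aZ + aT*(Y^2/X))) - (X*cO+cZ)*(p*(aO - aT*(Y^2/X^2))))
       /((1 + p*(aO*X + aZ + aT*(Y^2/X)))*(1 + p*(aO*X + aZ + aT*(Y^2/X))))) (at X)"
proof -
  have n: "((\<lambda>x. x*cO + cZ) has_real_derivative (1*cO + 0)) (at X)"
    by (intro DERIV_add DERIV_cmult_right DERIV_ident DERIV_const)
  show ?thesis using DERIV_divide[OF n dq1[OF X] D] by simp
qed

lemma dq2:
  shows "((\<lambda>y. 1 + p*(aZ + aO*y + aT*(y^2/X))) has_real_derivative (p*(aO + aT*(2*Y/X)))) (at Y)"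
proof -
  have q: "((\<lambda>y. y^2 * inverse X) has_real_derivative ((real 2 * Y^(2 - Suc 0)) * inverse X)) (at Y)"
    by (intro DERIV_cmult_right) (rule DERIV_pow)
  have q2: "((\<lambda>y. y^2/X) has_real_derivative (2*Y/X)) (at Y)"
    using q by (simp add: divide_inverse)
  have r: "((\<lambda>y. aZ + aO*y + aT*(y^2/X)) has_real_derivative (0 + aO*1 + aT*(2*Y/X))) (at Y)"
    by (intro DERIV_add DERIV_cmult DERIV_ident DERIV_const q2)
  have "((\<lambda>y. 1 + p*(aZ + aO*y + aT*(y^2/X))) has_real_derivative (0 + p*(0 + aO*1 + aT*(2*Y/X)))) (at Y)"
    by (intro DERIV_add DERIV_cmult DERIV_const r)
  then show ?thesis by (simp add: algebra_simps)
qed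

lemma LFy:
  assumes D: "1 + p*(aZ + aO*Y + aT*(Y^2/X)) \<noteq> 0"
  shows "((\<lambda>y. (cZ + cO*y)/(1 + p*(aZ + aO*y + aT*(y^2/X)))) has_real_derivative
     (cO*(1 + p*(aZ + aO*Y + aT*(Y^2/X))) - (cZ+cO*Y)*(p*(aO + aT*(2*Y/X))))
       /((1 + p*(aZ + aO*Y + aT*(Y^2/X)))*(1 + p*(aZ + aO*Y + aT*(Y^2/X))))) (at Y)"
proof -
  have n: "((\<lambda>y. cZ + cO*y) has_real_derivative (0 + cO*1)) (at Y)"
    by (intro DERIV_add DERIV_cmult DERIV_ident DERIV_const)
  show ?thesis using DERIV_divide[OF n dq2 D] by simp
qed

lemma phi1_pos:
  assumes "by' > 0" "uy > 0" "\<beta> > 0" "K > 0" "h > 0"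
  shows "phi1 by' uy \<beta> K h > 0"
proof -
  have "-(\<beta> * K * uy / by') * h < 0" using assms by (simp add: mult_pos_pos)
  then have "exp (-(\<beta> * K * uy / by') * h) < 1" by simp
  then show ?thesis unfolding phi1_def using assms by (simp add: mult_pos_pos)
qed

lemma tri_stable:
  fixes a b c d :: real
  assumes "b*c = 0" "\<bar>a\<bar> < 1" "\<bar>d\<bar> < 1"
  shows "\<forall>z. eigen2 a b c d z \<longrightarrow> cmod z < 1"
proof (intro allI impI)
  fix z assume "eigen2 a b c d z"
  then have "(z - of_real a) * (z - of_real d) = 0" using assms(1) unfolding eigen2_def
    by (metis diff_zero of_real_0 of_real_mult)
  then have "z = of_real a \<or> z = of_real d" by simp
  then show "cmod z < 1" using assms by auto
qed

lemma tri_unstable: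
  fixes a b c d :: real
  assumes "c = 0" "d > 1"
  shows "\<exists>z. eigen2 a b c d z \<and> cmod z > 1"
  using assms by (intro exI[of _ "of_real d"]) (simp add: eigen2_def)

lemma ratio_lt1:
  fixes u v :: real
  assumes "0 \<le> u" "u < v"
  shows "\<bar>(1+u)/(1+v)\<bar> < 1" "(1+u)/(1+v) > 0"
  using assms by (simp_all add: divide_less_eq)

lemma ratio_gt1:
  fixes u v :: real
  assumes "0 \<le> v" "v < u"
  shows "(1+u)/(1+v) > 1"
  using assms by (simp add: less_divide_eq)

lemma LLfix:
  fixes c1 d0 d1 X :: real
  assumes "d0 + d1*X = c1" "c1 \<noteq> 0"
  shows "(c1*(d0+d1*X) - (0+c1*X)*d1)/((d0+d1*X)*(d0+d1*X)) = d0/c1"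
proof -
  have "(c1*(d0+d1*X) - (0+c1*X)*d1)/((d0+d1*X)*(d0+d1*X)) = (c1*(c1 - X*d1))/(c1*c1)"
    using assms(1) by (simp add: algebra_simps)
  also have "\<dots> = (c1 - X*d1)/c1" using assms(2) by simp
  also have "c1 - X*d1 = d0" using assms(1) by (simp add: algebra_simps)
  finally show ?thesis .
qed

lemma qs:
  fixes c g N Z Dn :: real
  assumes "N = Z*Dn" "Dn \<noteq> 0"
  shows "(c*Dn - N*g)/(Dn*Dn) = (c - Z*g)/Dn"
  using assms by (simp add: field_simps)

lemma part1:
  fixes bx by' ux uy K \<beta> e h :: real
  assumes pos: "bx > 0" "by' > 0" "ux > 0" "uy > 0" "K > 0" "\<beta> > 0" "e > 0"
    and hpos: "h > 0" and c1: "bx < ux" and c2: "by' < uy"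
  shows "las2 (Fmap bx by' ux uy K \<beta> e h) (Gmap bx by' ux uy K \<beta> e h) 0 0"
proof -
  define p where "p = phi1 by' uy \<beta> K h"
  have p: "p > 0" unfolding p_def using pos hpos by (intro phi1_pos) auto
  define F where "F = Fmap bx by' ux uy K \<beta> e h"
  define G where "G = Gmap bx by' ux uy K \<beta> e h"
  have Fx: "(\<lambda>x. F x 0) = (\<lambda>x. (0 + (1+p*bx)*x)/((1+p*ux) + (p*bx/K)*x))"
    by (rule ext) (simp add: F_def Fmap_def Let_def p_def algebra_simps)
  have Fy: "(\<lambda>y. F 0 y) = (\<lambda>y. (0 + (p*e)*y)/((1+p*ux) + (p*(bx/K + \<beta> + e/K))*y))"
    by (rule ext) (simp add: F_def Fmap_def Let_def p_def algebra_simps)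
  have Gx: "(\<lambda>x. G x 0) = (\<lambda>x. (0 + 0*x)/(1 + 0*x))"
    by (rule ext) (simp add: G_def Gmap_def Let_def)
  have Gy: "(\<lambda>y. G 0 y) = (\<lambda>y. (0 + (1+h*by')*y)/((1+h*uy) + (h*by'/K)*y))"
    by (rule ext) (simp add: G_def Gmap_def Let_def phi2_def algebra_simps)
  have "p*ux > 0" "h*uy > 0" using p pos hpos by simp_all
  then have n1: "1 + p*ux \<noteq> 0" "1 + h*uy \<noteq> 0" by linarith+
  have da: "((\<lambda>x. F x 0) has_real_derivative ((1+p*bx)/(1+p*ux))) (at 0)"
    unfolding Fx by (rule DERIV_cong[OF LL]) (use n1 in simp_all)
  have db: "((\<lambda>y. F 0 y) has_real_derivative ((p*e)/(1+p*ux))) (at 0)"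
    unfolding Fy by (rule DERIV_cong[OF LL]) (use n1 in simp_all)
  have dc: "((\<lambda>x. G x 0) has_real_derivative 0) (at 0)"
    unfolding Gx by (rule DERIV_cong[OF LL]) simp_all
  have dd: "((\<lambda>y. G 0 y) has_real_derivative ((1+h*by')/(1+h*uy))) (at 0)"
    unfolding Gy by (rule DERIV_cong[OF LL]) (use n1 in simp_all)
  have ja: "is_jacobian F G 0 0 ((1+p*bx)/(1+p*ux)) ((p*e)/(1+p*ux)) 0 ((1+h*by')/(1+h*uy))"
    unfolding is_jacobian_def using da db dc dd by blast
  have a1: "\<bar>(1+p*bx)/(1+p*ux)\<bar> < 1"
    using p pos c1 by (intro ratio_lt1) simp_all
  have a2: "\<bar>(1+h*by')/(1+h*uy)\<bar> < 1"
    using hpos pos c2 by (intro ratio_lt1) simp_all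
  have fp: "fixed_point2 F G 0 0"
    by (simp add: fixed_point2_def F_def G_def Fmap_def Gmap_def Let_def)
  show ?thesis unfolding las2_def F_def[symmetric] G_def[symmetric]
    using fp ja tri_stable[OF _ a1 a2, of "(p*e)/(1+p*ux)" 0] by auto
qed

lemma part2:
  fixes bx by' ux uy K \<beta> e h :: real
  assumes pos: "bx > 0" "by' > 0" "ux > 0" "uy > 0" "K > 0" "\<beta> > 0" "e > 0"
    and hpos: "h > 0" and c1: "bx > ux"
  defines "Xbar \<equiv> K * (1 - ux / bx)"
    and "V0 \<equiv> by' / bx * (ux / uy)"
    and "H0 \<equiv> \<beta> / uy * K * (1 - ux / bx)"
  shows "(V0 + H0 < 1 \<longrightarrow> las2 (Fmap bx by' ux uy K \<beta> e h) (Gmap bx by' ux uy K \<beta> e h) Xbar 0)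
       \<and> (V0 + H0 > 1 \<longrightarrow> unstable2 (Fmap bx by' ux uy K \<beta> e h) (Gmap bx by' ux uy K \<beta> e h) Xbar 0)"
proof -
  define p where "p = phi1 by' uy \<beta> K h"
  have p: "p > 0" unfolding p_def using pos hpos by (intro phi1_pos) auto
  define F where "F = Fmap bx by' ux uy K \<beta> e h"
  define G where "G = Gmap bx by' ux uy K \<beta> e h"
  have Xb: "Xbar > 0" unfolding Xbar_def using pos c1 by simp
  have key: "bx/K*Xbar = bx - ux" unfolding Xbar_def using pos by (simp add: field_simps)
  have rel: "by' + \<beta>*Xbar - (by'/K*Xbar + uy) = uy*(V0+H0) - uy"
    unfolding Xbar_def V0_def H0_def using pos by (simp add: field_simps)
  have Fx: "(\<lambda>x. F x 0) = (\<lambda>x. (0 + (1+p*bx)*x)/((1+p*ux) + (p*bx/K)*x))"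
    by (rule ext) (simp add: F_def Fmap_def Let_def p_def algebra_simps)
  have Fy: "(\<lambda>y. F Xbar y) = (\<lambda>y. (Xbar*(1+p*bx) + (p*e)*y)/(1 + p*((bx/K*Xbar + ux) + (bx/K + \<beta> + e/K)*y + e/K*(y^2/Xbar))))"
    by (rule ext) (simp add: F_def Fmap_def Let_def p_def algebra_simps)
  have Gx: "(\<lambda>x. G x 0) = (\<lambda>x. (0 + 0*x)/(1 + 0*x))"
    by (rule ext) (simp add: G_def Gmap_def Let_def)
  have Gy: "(\<lambda>y. G Xbar y) = (\<lambda>y. (0 + (1+h*(by'+\<beta>*Xbar))*y)/((1+h*(by'/K*Xbar + uy)) + (h*by'/K)*y))"
    by (rule ext) (simp add: G_def Gmap_def Let_def phi2_def algebra_simps)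
  have "p*bx > 0" using p pos by simp
  then have nF: "1 + p*bx \<noteq> 0" by linarith
  have "h*(by'/K*Xbar + uy) > 0" using hpos pos Xb by (simp add: add_pos_pos)
  then have nG: "1 + h*(by'/K*Xbar + uy) \<noteq> 0" by linarith
  have "(1 + p * ux + p * bx / K * Xbar) = 1 + p*(ux + bx/K*Xbar)" by (simp add: algebra_simps)
  also have "\<dots> = 1 + p*bx" using key by simp
  finally have d0: "(1 + p * ux + p * bx / K * Xbar) = 1 + p*bx" .
  have da: "((\<lambda>x. F x 0) has_real_derivative ((1+p*ux)/(1+p*bx))) (at Xbar)"
    unfolding Fx
    by (rule DERIV_cong[OF LL]) (use nF d0 in simp, rule LLfix[OF d0 nF])
  define bb where "bb = ((p*e)*(1 + p*((bx/K*Xbar + ux) + (bx/K + \<beta> + e/K)*0 + e/K*(0^2/Xbar))) - (Xbar*(1+p*bx)+(p*e)*0)*(p*((bx/K + \<beta> + e/K) + e/K*(2*0/Xbar))))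
       /((1 + p*((bx/K*Xbar + ux) + (bx/K + \<beta> + e/K)*0 + e/K*(0^2/Xbar)))*(1 + p*((bx/K*Xbar + ux) + (bx/K + \<beta> + e/K)*0 + e/K*(0^2/Xbar))))"
  have db: "((\<lambda>y. F Xbar y) has_real_derivative bb) (at 0)"
    unfolding Fy bb_def by (rule LFy) (use nF key in simp)
  have dc: "((\<lambda>x. G x 0) has_real_derivative 0) (at Xbar)"
    unfolding Gx by (rule DERIV_cong[OF LL]) simp_all
  have dd: "((\<lambda>y. G Xbar y) has_real_derivative ((1+h*(by'+\<beta>*Xbar))/(1+h*(by'/K*Xbar + uy)))) (at 0)"
    unfolding Gy by (rule DERIV_cong[OF LL]) (use nG in simp_all)
  have ja: "is_jacobian F G Xbar 0 ((1+p*ux)/(1+p*bx)) bb 0 ((1+h*(by'+\<beta>*Xbar))/(1+h*(by'/K*Xbar + uy)))"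
    unfolding is_jacobian_def using da db dc dd by blast
  have fp: "fixed_point2 F G Xbar 0"
  proof -
    have "F Xbar 0 = Xbar * (1+p*bx) / (1 + p*bx)"
      using d0 by (simp add: F_def Fmap_def Let_def p_def algebra_simps)
    then show ?thesis using nF by (simp add: fixed_point2_def G_def Gmap_def Let_def)
  qed
  have a1: "\<bar>(1+p*ux)/(1+p*bx)\<bar> < 1"
    using p pos c1 by (intro ratio_lt1) simp_all
  show ?thesis
  proof (intro conjI impI)
    assume "V0 + H0 < 1"
    then have "uy*(V0+H0) < uy*1" using pos by simp
    then have "h*(by'+\<beta>*Xbar) < h*(by'/K*Xbar + uy)" using rel hpos by simp
    then have a2: "\<bar>(1+h*(by'+\<beta>*Xbar))/(1+h*(by'/K*Xbar + uy))\<bar> < 1"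
      using hpos pos Xb by (intro ratio_lt1) simp_all
    show "las2 (Fmap bx by' ux uy K \<beta> e h) (Gmap bx by' ux uy K \<beta> e h) Xbar 0"
      unfolding las2_def F_def[symmetric] G_def[symmetric]
      using fp ja tri_stable[OF _ a1 a2, of bb 0] by auto
  next
    assume "V0 + H0 > 1"
    then have "uy*(V0+H0) > uy*1" using pos by simp
    then have "h*(by'+\<beta>*Xbar) > h*(by'/K*Xbar + uy)" using rel hpos by simp
    then have a2: "(1+h*(by'+\<beta>*Xbar))/(1+h*(by'/K*Xbar + uy)) > 1"
      using hpos pos Xb by (intro ratio_gt1) simp_all
    show "unstable2 (Fmap bx by' ux uy K \<beta> e h) (Gmap bx by' ux uy K \<beta> e h) Xbar 0"
      unfolding unstable2_def F_def[symmetric] G_def[symmetric]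
      using fp ja tri_unstable[OF _ a2, of 0 "(1+p*ux)/(1+p*bx)" bb] by blast
  qed
qed

lemma part3:
  fixes bx by' ux uy K \<beta> e h :: real
  assumes pos: "bx > 0" "by' > 0" "ux > 0" "uy > 0" "K > 0" "\<beta> > 0" "e > 0"
    and uyux: "uy > ux" and bxby: "bx \<ge> by' + e"
    and hpos: "h > 0" and c1: "bx > ux" and c2: "by' > uy" and c3: "by' > \<beta> * K"
    and c4: "K / Xstar bx by' ux uy K \<beta> e > (by' - \<beta> * K) / (by' - uy)"
  shows "las2 (Fmap bx by' ux uy K \<beta> e h) (Gmap bx by' ux uy K \<beta> e h)
           (Xstar bx by' ux uy K \<beta> e) (Ystar bx by' ux uy K \<beta> e)"
proof -
  define A where "A = qA bx by' ux uy K \<beta> e"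
  define B where "B = qB bx by' ux uy K \<beta> e"
  define C where "C = qC bx by' ux uy K \<beta> e"
  define X where "X = Xstar bx by' ux uy K \<beta> e"
  define Y where "Y = Ystar bx by' ux uy K \<beta> e"
  define S where "S = sqrt (B^2 - 4*A*C)"
  have XS: "X = (-B + S)/(2*A)" unfolding X_def S_def Xstar_def A_def B_def C_def Let_def by simp
  have YX: "Y = (\<beta> * K - by') * X / by' + K * (by' - uy) / by'"
    unfolding Y_def X_def Ystar_def by simp
  have Apos: "A > 0"
  proof -
    have "by' * (bx - by' - e) \<ge> 0" using pos bxby by simp
    moreover have "\<beta> * K * (by' + e) > 0" using pos by simp
    ultimately have "by' * (bx - by' - e) + \<beta> * K * (by' + e) > 0" by linarith
    moreover have "\<beta> * K / by'^2 > 0" using pos by simp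
    ultimately show ?thesis unfolding A_def qA_def by (intro mult_pos_pos)
  qed
  have Cneg: "C < 0" unfolding C_def qC_def using pos c2 by simp
  have "B^2 - 4*A*C > B^2" using Apos Cneg by (simp add: mult_pos_neg)
  then have "S > sqrt (B^2)" unfolding S_def by (rule real_sqrt_less_mono)
  then have SB: "S > \<bar>B\<bar>" by simp
  have disc: "B^2 - 4*A*C \<ge> 0" using \<open>B^2 - 4*A*C > B^2\<close> zero_le_power2[of B] by linarith
  have S2: "S^2 = B^2 - 4*A*C" unfolding S_def using disc by simp
  have "-B + S > 0" using SB abs_ge_self[of B] by linarith
  then have Xpos: "X > 0" unfolding XS using Apos by (intro divide_pos_pos) auto
  have quad: "A*X^2 + B*X + C = 0"
  proof -
    have X2: "2*A*X = S - B" unfolding XS using Apos by (simp add: field_simps)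
    have "4*A*(A*X^2 + B*X + C) = (2*A*X)^2 + 2*B*(2*A*X) + 4*A*C"
      by (simp add: power2_eq_square algebra_simps)
    also have "\<dots> = (S - B)^2 + 2*B*(S - B) + 4*A*C" unfolding X2 ..
    also have "\<dots> = S^2 - B^2 + 4*A*C" by (simp add: power2_eq_square algebra_simps)
    also have "\<dots> = 0" using S2 by simp
    finally show ?thesis using Apos by simp
  qed
  define W where "W = K - X - Y"
  have Ydef: "by' * Y = (\<beta>*K - by')*X + K*(by' - uy)" unfolding YX using pos by (simp add: field_simps)
  have Ypos: "Y > 0"
  proof -
    have "(by' - \<beta>*K) * X < K * (by' - uy)" using c4 Xpos c2 unfolding X_def[symmetric]
      by (simp add: field_simps)
    then have "by' * Y > 0" unfolding Ydef by (simp add: algebra_simps)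
    then show ?thesis using pos by (simp add: zero_less_mult_iff)
  qed
  have rel1: "by' * W = uy*K - \<beta>*K*X" unfolding W_def using Ydef by (simp add: algebra_simps)
  define P where "P = (\<beta>*K - by')*X + K*(by' - uy)"
  have eA: "by'^2 * A = \<beta>*K*(by'*(bx - by' - e) + \<beta>*K*(by' + e))"
    unfolding A_def qA_def using pos by (simp add: field_simps)
  have eB: "by'^2 * B = -K*(bx-ux)*by'^2 + K*(bx+\<beta>*K+e)*(by'-uy)*by' + 2*e*K*(\<beta>*K - by')*(by'-uy) - e*K*(\<beta>*K - by')*by'"
    unfolding B_def qB_def using pos by (simp add: field_simps power2_eq_square)
  have eC: "by'^2 * C = -(e*K^2*(by'-uy)*uy)"
    unfolding C_def qC_def using pos by (simp add: field_simps)
  have L1: "by'^2*(W*(bx*X+e*Y) - X*(ux*K+\<beta>*K*Y)) = (by'*K - by'*X - by'*Y)*(bx*X*by' + e*(by'*Y)) - X*by'*(ux*K*by' + \<beta>*K*(by'*Y))"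
    unfolding W_def by (simp add: algebra_simps power2_eq_square)
  also have "\<dots> = (by'*K - by'*X - P)*(bx*X*by' + e*P) - X*by'*(ux*K*by' + \<beta>*K*P)"
    unfolding Ydef P_def ..
  finally have L: "by'^2*(W*(bx*X+e*Y) - X*(ux*K+\<beta>*K*Y)) = (by'*K - by'*X - P)*(bx*X*by' + e*P) - X*by'*(ux*K*by' + \<beta>*K*P)" .
  have LR: "(by'*K - by'*X - P)*(bx*X*by' + e*P) - X*by'*(ux*K*by' + \<beta>*K*P)
      = -(\<beta>*K*(by'*(bx - by' - e) + \<beta>*K*(by' + e))*X^2 + (-K*(bx-ux)*by'^2 + K*(bx+\<beta>*K+e)*(by'-uy)*by' + 2*e*K*(\<beta>*K - by')*(by'-uy) - e*K*(\<beta>*K - by')*by')*X + -(e*K^2*(by'-uy)*uy))"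
    unfolding P_def by (simp add: algebra_simps power2_eq_square)
  have R: "by'^2*(-(A*X^2 + B*X + C)) = -((by'^2*A)*X^2 + (by'^2*B)*X + by'^2*C)" by (simp add: algebra_simps)
  also have "\<dots> = -(\<beta>*K*(by'*(bx - by' - e) + \<beta>*K*(by' + e))*X^2 + (-K*(bx-ux)*by'^2 + K*(bx+\<beta>*K+e)*(by'-uy)*by' + 2*e*K*(\<beta>*K - by')*(by'-uy) - e*K*(\<beta>*K - by')*by')*X + -(e*K^2*(by'-uy)*uy))"
    unfolding eA eB eC ..
  finally have "by'^2*(W*(bx*X+e*Y) - X*(ux*K+\<beta>*K*Y)) = by'^2 * (-(A*X^2 + B*X + C))"
    using L LR by simp
  then have ident: "W*(bx*X + e*Y) - X*(ux*K + \<beta>*K*Y) = -(A*X^2 + B*X + C)" using pos by simp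
  have rel2: "W*(bx*X + e*Y) = X*(ux*K + \<beta>*K*Y)" using ident quad by simp
  have Xb: "bx*X + e*Y > 0" using pos Xpos Ypos by (simp add: add_pos_pos)
  have "X*(ux*K + \<beta>*K*Y) > 0" using pos Xpos Ypos by (simp add: add_pos_pos)
  then have "W*(bx*X + e*Y) > 0" using rel2 by simp
  then have Wpos: "W > 0" using Xb by (simp add: zero_less_mult_iff)
  have XK: "X < K" and YK: "Y < K" using Wpos Xpos Ypos unfolding W_def by simp_all
  have key: "e*W < \<beta>*K*X"
  proof -
    have k0: "X*(ux*K) < X*(uy*K)" using Xpos pos uyux by simp
    have k3: "W*X*e \<le> W*X*(bx - by')" using Wpos Xpos bxby by (intro mult_left_mono) simp_all
    have "(X+Y)*(e*W) = W*X*e + W*e*Y" by (simp add: algebra_simps)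
    also have "\<dots> \<le> W*X*(bx - by') + W*e*Y" using k3 by simp
    also have "\<dots> = W*(bx*X + e*Y) - (by'*W)*X" by (simp add: algebra_simps)
    also have "\<dots> = X*(ux*K) + X*(\<beta>*K*Y) - (by'*W)*X" unfolding rel2 by (simp add: algebra_simps)
    also have "\<dots> < X*(uy*K) + X*(\<beta>*K*Y) - (by'*W)*X" using k0 by simp
    also have "\<dots> = (X+Y)*(\<beta>*K*X)" unfolding rel1 by (simp add: algebra_simps)
    finally have "(X+Y)*(e*W) < (X+Y)*(\<beta>*K*X)" .
    moreover have "X + Y > 0" using Xpos Ypos by simp
    ultimately show ?thesis by simp
  qed
  define p where "p = phi1 by' uy \<beta> K h"
  have p: "p > 0" unfolding p_def using pos hpos by (intro phi1_pos) auto
  define F where "F = Fmap bx by' ux uy K \<beta> e h"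
  define G where "G = Gmap bx by' ux uy K \<beta> e h"
  define Dn where "Dn = 1 + p*(bx/K*X + (bx/K*Y + ux + \<beta>*Y + e/K*Y) + e/K*(Y^2/X))"
  define E where "E = bx + e*Y/X"
  have Epos: "E > 0" unfolding E_def using pos Xpos Ypos by (simp add: add_pos_pos)
  have eqE: "bx/K*X + (bx/K*Y + ux + \<beta>*Y + e/K*Y) + e/K*(Y^2/X) = E"
  proof -
    have l: "K*X*(bx/K*X + (bx/K*Y + ux + \<beta>*Y + e/K*Y) + e/K*(Y^2/X)) = bx*X*X + bx*X*Y + ux*K*X + \<beta>*K*X*Y + e*X*Y + e*Y*Y"
      using pos Xpos by (simp add: field_simps power2_eq_square)
    have r: "K*X*E = bx*K*X + e*K*Y" unfolding E_def using pos Xpos by (simp add: field_simps)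
    have m: "bx*X*X + bx*X*Y + ux*K*X + \<beta>*K*X*Y + e*X*Y + e*Y*Y = bx*K*X + e*K*Y"
      using rel2 unfolding W_def by (simp add: algebra_simps)
    have "K*X*(bx/K*X + (bx/K*Y + ux + \<beta>*Y + e/K*Y) + e/K*(Y^2/X)) = K*X*E" using l r m by simp
    then show ?thesis using pos Xpos by simp
  qed
  have DnE: "Dn = 1 + p*E" unfolding Dn_def eqE ..
  have Dnpos: "Dn > 0" unfolding DnE using p Epos by (simp add: add_pos_pos)
  have Nfix: "X*(1+p*bx) + p*e*Y = X*Dn" unfolding DnE E_def using Xpos by (simp add: field_simps)
  define Dg where "Dg = 1 + h*(by' + \<beta>*X)"
  have Dgpos: "Dg > 0" unfolding Dg_def using hpos pos Xpos by (simp add: add_pos_pos)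
  have eqG: "by'/K*X + by'/K*Y + uy = by' + \<beta>*X"
  proof -
    have "K*(by'/K*X + by'/K*Y + uy) = K*(by' + \<beta>*X)"
      using rel1 pos unfolding W_def by (simp add: field_simps)
    then show ?thesis using pos by simp
  qed
  have fp: "fixed_point2 F G X Y"
  proof -
    have "F X Y = (X*(1+p*bx) + p*e*Y)/Dn"
      by (simp add: F_def Fmap_def Let_def p_def Dn_def algebra_simps)
    then have f: "F X Y = X" using Nfix Dnpos by simp
    have "G X Y = Y*(1+h*(by'+\<beta>*X))/(1 + h*(by'/K*X + by'/K*Y + uy))"
      by (simp add: G_def Gmap_def Let_def phi2_def)
    then have g: "G X Y = Y" unfolding eqG using Dgpos[unfolded Dg_def] by simp
    show ?thesis unfolding fixed_point2_def using f g by simp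
  qed
  define m11 where "m11 = e*Y/X + bx*X/K - e*Y^2/(K*X)"
  define m12 where "m12 = X*(bx+e)/K + \<beta>*X + 2*e*Y/K - e"
  define m21 where "m21 = Y*(by'/K - \<beta>)"
  define m22 where "m22 = Y*by'/K"
  have Xn: "X \<noteq> 0" using Xpos by simp
  have Kn: "K \<noteq> 0" using pos by simp
  have Fx: "(\<lambda>x. F x Y) = (\<lambda>x. (x*(1+p*bx) + p*e*Y)/(1 + p*(bx/K*x + (bx/K*Y + ux + \<beta>*Y + e/K*Y) + e/K*(Y^2/x))))"
    by (rule ext) (simp add: F_def Fmap_def Let_def p_def algebra_simps)
  have Dnz: "1 + p*(bx/K*X + (bx/K*Y + ux + \<beta>*Y + e/K*Y) + e/K*(Y^2/X)) \<noteq> 0"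
    using Dnpos unfolding Dn_def by simp
  note da0 = LFx[OF Xn Dnz, of "1+p*bx" "p*e*Y"]
  have da: "((\<lambda>x. F x Y) has_real_derivative (1 - p*m11/Dn)) (at X)"
    unfolding Fx
  proof (rule DERIV_cong[OF da0])
    have "((1+p*bx)*Dn - (X*(1+p*bx) + p*e*Y)*(p*(bx/K - e/K*(Y^2/X^2))))/(Dn*Dn)
        = ((1+p*bx) - X*(p*(bx/K - e/K*(Y^2/X^2))))/Dn"
      using Nfix Dnpos by (intro qs) simp_all
    also have "(1+p*bx) - X*(p*(bx/K - e/K*(Y^2/X^2))) = Dn - p*m11"
      unfolding m11_def DnE E_def using Xn Kn by (simp add: field_simps power2_eq_square)
    also have "(Dn - p*m11)/Dn = 1 - p*m11/Dn" using Dnpos by (simp add: diff_divide_distrib)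
    finally show "((1+p*bx)*(1 + p*(bx/K*X + (bx/K*Y + ux + \<beta>*Y + e/K*Y) + e/K*(Y^2/X))) - (X*(1+p*bx) + p*e*Y)*(p*(bx/K - e/K*(Y^2/X^2))))
       /((1 + p*(bx/K*X + (bx/K*Y + ux + \<beta>*Y + e/K*Y) + e/K*(Y^2/X)))*(1 + p*(bx/K*X + (bx/K*Y + ux + \<beta>*Y + e/K*Y) + e/K*(Y^2/X))))
       = 1 - p*m11/Dn" unfolding Dn_def .
  qed
  have Fy: "(\<lambda>y. F X y) = (\<lambda>y. (X*(1+p*bx) + (p*e)*y)/(1 + p*((bx/K*X + ux) + (bx/K + \<beta> + e/K)*y + e/K*(y^2/X))))"
    by (rule ext) (simp add: F_def Fmap_def Let_def p_def algebra_simps)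
  have eqDn2: "1 + p*((bx/K*X + ux) + (bx/K + \<beta> + e/K)*Y + e/K*(Y^2/X)) = Dn"
    by (simp add: Dn_def algebra_simps)
  have Dnz2: "1 + p*((bx/K*X + ux) + (bx/K + \<beta> + e/K)*Y + e/K*(Y^2/X)) \<noteq> 0"
    unfolding eqDn2 using Dnpos by simp
  note db0 = LFy[where p=p and aZ="bx/K*X + ux" and aO="bx/K + \<beta> + e/K" and aT="e/K" and X=X and Y=Y
       and cZ="X*(1+p*bx)" and cO="p*e", OF Dnz2, unfolded eqDn2]
  have db: "((\<lambda>y. F X y) has_real_derivative (-(p*m12/Dn))) (at Y)"
    unfolding Fy
  proof (rule DERIV_cong[OF db0])
    have "((p*e)*Dn - (X*(1+p*bx) + p*e*Y)*(p*((bx/K + \<beta> + e/K) + e/K*(2*Y/X))))/(Dn*Dn)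
        = ((p*e) - X*(p*((bx/K + \<beta> + e/K) + e/K*(2*Y/X))))/Dn"
      using Nfix Dnpos by (intro qs) simp_all
    also have "(p*e) - X*(p*((bx/K + \<beta> + e/K) + e/K*(2*Y/X))) = -(p*m12)"
      unfolding m12_def using Xn Kn by (simp add: field_simps)
    also have "(-(p*m12))/Dn = -(p*m12/Dn)" by simp
    finally show "((p*e)*Dn - (X*(1+p*bx) + p*e*Y)*(p*((bx/K + \<beta> + e/K) + e/K*(2*Y/X))))/(Dn*Dn) = -(p*m12/Dn)" .
  qed
  have Gx: "(\<lambda>x. G x Y) = (\<lambda>x. (Y*(1+h*by') + (Y*h*\<beta>)*x)/((1 + h*(by'/K*Y + uy)) + (h*by'/K)*x))"
    by (rule ext) (simp add: G_def Gmap_def Let_def phi2_def algebra_simps)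
  have eqG1: "(1 + h*(by'/K*Y + uy)) + (h*by'/K)*X = Dg"
  proof -
    have "(1 + h*(by'/K*Y + uy)) + (h*by'/K)*X = 1 + h*(by'/K*X + by'/K*Y + uy)" by (simp add: algebra_simps)
    then show ?thesis unfolding eqG Dg_def .
  qed
  have Gz1: "(1 + h*(by'/K*Y + uy)) + (h*by'/K)*X \<noteq> 0" unfolding eqG1 using Dgpos by simp
  note dc0 = LL[where cZ="Y*(1+h*by')" and cO="Y*h*\<beta>" and dZ="1 + h*(by'/K*Y + uy)" and dO="h*by'/K" and X=X,
      OF Gz1, unfolded eqG1]
  have dc: "((\<lambda>x. G x Y) has_real_derivative (-(h*m21/Dg))) (at X)"
    unfolding Gx
  proof (rule DERIV_cong[OF dc0])
    have "((Y*h*\<beta>)*Dg - (Y*(1+h*by') + (Y*h*\<beta>)*X)*(h*by'/K))/(Dg*Dg) = ((Y*h*\<beta>) - Y*(h*by'/K))/Dg"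
      using Dgpos by (intro qs) (simp_all add: Dg_def algebra_simps)
    also have "(Y*h*\<beta>) - Y*(h*by'/K) = -(h*m21)" unfolding m21_def by (simp add: algebra_simps)
    also have "(-(h*m21))/Dg = -(h*m21/Dg)" by simp
    finally show "((Y*h*\<beta>)*Dg - (Y*(1+h*by') + (Y*h*\<beta>)*X)*(h*by'/K))/(Dg*Dg) = -(h*m21/Dg)" .
  qed
  have Gy: "(\<lambda>y. G X y) = (\<lambda>y. (0 + (1+h*(by'+\<beta>*X))*y)/((1 + h*(by'/K*X + uy)) + (h*by'/K)*y))"
    by (rule ext) (simp add: G_def Gmap_def Let_def phi2_def algebra_simps)
  have eqG2: "(1 + h*(by'/K*X + uy)) + (h*by'/K)*Y = Dg"
  proof -
    have "(1 + h*(by'/K*X + uy)) + (h*by'/K)*Y = 1 + h*(by'/K*X + by'/K*Y + uy)" by (simp add: algebra_simps)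
    then show ?thesis unfolding eqG Dg_def .
  qed
  have Gz2: "(1 + h*(by'/K*X + uy)) + (h*by'/K)*Y \<noteq> 0" unfolding eqG2 using Dgpos by simp
  note dd0 = LL[where cZ=0 and cO="1+h*(by'+\<beta>*X)" and dZ="1 + h*(by'/K*X + uy)" and dO="h*by'/K" and X=Y,
      OF Gz2, unfolded eqG2]
  have dd: "((\<lambda>y. G X y) has_real_derivative (1 - h*m22/Dg)) (at Y)"
    unfolding Gy
  proof (rule DERIV_cong[OF dd0])
    have "((1+h*(by'+\<beta>*X))*Dg - (0 + (1+h*(by'+\<beta>*X))*Y)*(h*by'/K))/(Dg*Dg) = ((1+h*(by'+\<beta>*X)) - Y*(h*by'/K))/Dg"
      using Dgpos by (intro qs) (simp_all add: Dg_def algebra_simps)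
    also have "(1+h*(by'+\<beta>*X)) - Y*(h*by'/K) = Dg - h*m22" unfolding m22_def Dg_def by (simp add: algebra_simps)
    also have "(Dg - h*m22)/Dg = 1 - h*m22/Dg" using Dgpos by (simp add: diff_divide_distrib)
    finally show "((1+h*(by'+\<beta>*X))*Dg - (0 + (1+h*(by'+\<beta>*X))*Y)*(h*by'/K))/(Dg*Dg) = 1 - h*m22/Dg" .
  qed
  have ja: "is_jacobian F G X Y (1 - p*m11/Dn) (-(p*m12/Dn)) (-(h*m21/Dg)) (1 - h*m22/Dg)"
    unfolding is_jacobian_def using da db dc dd by blast
  have KY: "K - Y > 0" using YK by simp
  have "m11 = e*Y*(K - Y)/(K*X) + bx*X/K" unfolding m11_def using Xn Kn by (simp add: field_simps power2_eq_square)
  moreover have "e*Y*(K - Y)/(K*X) > 0" using pos Ypos KY Xpos by simp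
  moreover have "bx*X/K > 0" using pos Xpos by simp
  ultimately have m11pos: "m11 > 0" by linarith
  have "E - m11 = bx*(K - X)/K + e*Y^2/(K*X)" unfolding m11_def E_def using Xn Kn by (simp add: field_simps power2_eq_square)
  moreover have "bx*(K - X)/K > 0" using pos XK by simp
  moreover have "e*Y^2/(K*X) > 0" using pos Ypos Xpos by simp
  ultimately have m11E: "m11 < E" by linarith
  have "K*m12 = bx*X + e*Y + (\<beta>*K*X - e*W)" unfolding m12_def W_def using Kn by (simp add: field_simps)
  moreover have "bx*X + e*Y + (\<beta>*K*X - e*W) > 0" using Xb key by linarith
  ultimately have "K*m12 > 0" by simp
  then have m12pos: "m12 > 0" using pos by (simp add: zero_less_mult_iff)
  have "by'/K > \<beta>" using c3 pos by (simp add: less_divide_eq)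
  then have m21pos: "m21 > 0" unfolding m21_def using Ypos by simp
  have m22pos: "m22 > 0" unfolding m22_def using Ypos pos by simp
  have m22lt: "m22 < by'" unfolding m22_def using YK pos by (simp add: divide_less_eq)
  have i1: "m11*m22 - m12*m21 = (Y/K)*(by'*m11 - (by' - \<beta>*K)*m12)"
    unfolding m22_def m21_def using Kn by (simp add: field_simps)
  have i2: "by'*m11 - (by' - \<beta>*K)*m12 = by'*e*Y*W/(K*X) + e*W*(by' - \<beta>*K)/K + \<beta>*X*(bx + \<beta>*K - by') + \<beta>*e*Y"
    unfolding m11_def m12_def W_def using Xn Kn by (simp add: field_simps power2_eq_square)
  have "by'*e*Y*W/(K*X) > 0" using pos Ypos Wpos Xpos by simp
  moreover have "e*W*(by' - \<beta>*K)/K > 0" using pos Wpos c3 by simp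
  moreover have "\<beta>*K > 0" using pos by simp
  then have "bx + \<beta>*K - by' > 0" using pos bxby by linarith
  then have "\<beta>*X*(bx + \<beta>*K - by') > 0" using pos Xpos by simp
  moreover have "\<beta>*e*Y > 0" using pos Ypos by simp
  ultimately have "by'*m11 - (by' - \<beta>*K)*m12 > 0" unfolding i2 by linarith
  then have Dm: "m11*m22 - m12*m21 > 0" unfolding i1 using Ypos pos by simp
  define x1 where "x1 = p*m11/Dn"
  define y1 where "y1 = h*m22/Dg"
  define Pp where "Pp = (p*m12/Dn)*(h*m21/Dg)"
  have x1pos: "x1 > 0" unfolding x1_def using p m11pos Dnpos by simp
  have "p*m11 < p*E" using p m11E by simp
  then have "p*m11 < Dn" unfolding DnE by simp
  then have x1lt: "x1 < 1" unfolding x1_def using Dnpos by simp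
  have y1pos: "y1 > 0" unfolding y1_def using hpos m22pos Dgpos by simp
  have "h*m22 < h*by'" using hpos m22lt by simp
  moreover have "h*(\<beta>*X) > 0" using hpos pos Xpos by simp
  ultimately have "h*m22 < Dg" unfolding Dg_def by (simp add: algebra_simps)
  then have y1lt: "y1 < 1" unfolding y1_def using Dgpos by simp
  have Pppos: "Pp > 0" unfolding Pp_def using p hpos m12pos m21pos Dnpos Dgpos by simp
  have "x1*y1 - Pp = (p/Dn)*(h/Dg)*(m11*m22 - m12*m21)"
    unfolding x1_def y1_def Pp_def using Dnpos Dgpos by (simp add: field_simps)
  moreover have "(p/Dn)*(h/Dg) > 0" using p hpos Dnpos Dgpos by simp
  ultimately have xyP: "x1*y1 - Pp > 0" using Dm by (metis mult_pos_pos)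
  have xy: "x1*y1 < x1" using x1pos y1lt by simp
  have det: "(1 - x1)*(1 - y1) - (-(p*m12/Dn))*(-(h*m21/Dg)) = 1 - x1 - y1 + x1*y1 - Pp"
    unfolding Pp_def by (simp add: algebra_simps)
  have J1: "\<bar>(1 - x1) + (1 - y1)\<bar> < 1 + ((1 - x1)*(1 - y1) - (-(p*m12/Dn))*(-(h*m21/Dg)))"
    unfolding det using x1pos x1lt y1pos y1lt xyP by (simp add: abs_if)
  have J2: "(1 - x1)*(1 - y1) - (-(p*m12/Dn))*(-(h*m21/Dg)) < 1"
    unfolding det using y1pos xy Pppos by simp
  have st: "\<forall>z. eigen2 (1 - x1) (-(p*m12/Dn)) (-(h*m21/Dg)) (1 - y1) z \<longrightarrow> cmod z < 1"
    by (rule jury[OF J1 J2])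
  show ?thesis unfolding las2_def F_def[symmetric] G_def[symmetric] X_def[symmetric] Y_def[symmetric]
    using fp ja st unfolding x1_def y1_def by blast





qed

theorem theorem4:
  fixes bx by' ux uy K \<beta> e h :: real
  assumes pos: "bx > 0" "by' > 0" "ux > 0" "uy > 0" "K > 0" "\<beta> > 0" "e > 0"
    and uyux: "uy > ux" and bxby: "bx \<ge> by' + e"
    and hpos: "h > 0"
  defines "F \<equiv> Fmap bx by' ux uy K \<beta> e h"
    and "G \<equiv> Gmap bx by' ux uy K \<beta> e h"
    and "Xbar \<equiv> K * (1 - ux / bx)"
    and "Xs \<equiv> Xstar bx by' ux uy K \<beta> e"
    and "Ys \<equiv> Ystar bx by' ux uy K \<beta> e"
    and "V0 \<equiv> by' / bx * (ux / uy)"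
    and "H0 \<equiv> \<beta> / uy * K * (1 - ux / bx)"
  shows "((bx < ux \<and> by' < uy) \<longrightarrow> las2 F G 0 0)
       \<and> (bx > ux \<longrightarrow> ((V0 + H0 < 1 \<longrightarrow> las2 F G Xbar 0) \<and> (V0 + H0 > 1 \<longrightarrow> unstable2 F G Xbar 0)))
       \<and> ((bx > ux \<and> by' > uy \<and> by' > \<beta> * K \<and> K / Xs > (by' - \<beta> * K) / (by' - uy))
            \<longrightarrow> las2 F G Xs Ys)"
proof (intro conjI impI)
  assume "bx < ux \<and> by' < uy"
  then show "las2 F G 0 0" unfolding F_def G_def using part1[OF pos hpos] by blast
next
  assume c: "bx > ux" "V0 + H0 < 1"
  then show "las2 F G Xbar 0" unfolding F_def G_def Xbar_def
    using part2[OF pos hpos c(1)] unfolding V0_def H0_def by blast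
next
  assume c: "bx > ux" "V0 + H0 > 1"
  then show "unstable2 F G Xbar 0" unfolding F_def G_def Xbar_def
    using part2[OF pos hpos c(1)] unfolding V0_def H0_def by blast
next
  assume c: "bx > ux \<and> by' > uy \<and> by' > \<beta> * K \<and> K / Xs > (by' - \<beta> * K) / (by' - uy)"
  show "las2 F G Xs Ys" unfolding F_def G_def Xs_def Ys_def
    using part3[OF pos uyux bxby hpos] c unfolding Xs_def by blast
qed

end
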